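(* Consider NSGA-III (as defined in the context) on an arbitrary $m$-objective function $f:\{0,1\}^n\to\mathbb N_0^m$ with $\varepsilon_{\mathrm{nad}}\ge f_{\max}$, reference set $\mathcal R_p$ with $p\ge 2m^{3/2}f_{\max}$, and population size $\mu\ge|S|$, where $S$ is a maximum-cardinality set of mutually incomparable solutions of $f$ (any initial population, any rule for choosing extreme points). Then in every generation $t$, for every $x\in F^1_t$ there is $x'\in P_{t+1}$ with $f(x')=f(x)$.
   Context: Let $f=(f_1,\dots,f_m):\{0,1\}^n\to\mathbb N_0^m$ be an $m$-objective function to be maximized, and $f_{\max}:=\max\{f_j(x): x\in\{0,1\}^n, j\in[m]\}$, assumed $\ge 1$. For $x,y\in\{0,1\}^n$: $x\succeq y$ ($x$ weakly dominates $y$) iff $f_j(x)\ge f_j(y)$ for all $j$; $x\succ y$ iff $x\succeq y$ and $f_j(x)>f_j(y)$ for some $j$; $x,y$ are incomparable if neither $x\succeq y$ nor $y\succeq x$. A set $S\subseteq\{0,1\}^n$ is a set of mutually incomparable solutions if any two distinct elements are incomparable. For $p\in\mathbb N$ the reference set is $\mathcal R_p=\{(a_1/p,\dots,a_m/p): (a_1,\dots,a_m)\in\mathbb N_0^m,\ \sum_i a_i=p\}$. NSGA-III with population size $\mu$, threshold $\varepsilon_{\mathrm{nad}}>0$ and reference set $\mathcal R_p$: start with a population $P_0$ (a multiset of $\mu$ bit strings; arbitrary), $E_0=\{(-\infty,\dots,-\infty)\}$, $y^{\max}=(-\infty,\dots,-\infty)$, $y^{\min}=(+\infty,\dots,+\infty)$.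 In generation $t=0,1,2,\dots$: (1) Offspring: $Q_t$ consists of $\mu$ offspring, each created independently by choosing a parent uniformly at random from $P_t$ and flipping each of its bits independently with probability $1/n$. (2) Sorting: $R_t=P_t\cup Q_t$ (multiset of size $2\mu$) is partitioned into layers $F^1_t,\dots,F^k_t$, where $F^1_t$ consists of the members of $R_t$ not dominated (w.r.t. $\succ$) by any member of $R_t$, and $F^i_t$ consists of the members of $R_t\setminus(F^1_t\cup\dots\cup F^{i-1}_t)$ not dominated by any member of that set. Let $i^*$ be the index with $\sum_{i<i^*}|F^i_t|<\mu\le\sum_{i\le i^*}|F^i_t|$, and $Y_t=\bigcup_{i<i^*}F^i_t$. (3) Normalization: for each $j$, set $y^{\min}_j\leftarrow\min(y^{\min}_j,\min_{x\in R_t}f_j(x))$ and $y^{\max}_j\leftarrow\max(y^{\max}_j,\max_{x\in F^1_t}f_j(x))$ (so these are running extremes over all generations so far), and choose an extreme point $e^{(j)}\in f(Y_t\cup F^{i^*}_t)\cup E_t$ by some fixed rule (originally via an achievement scalarization function); set $E_{t+1}=\{e^{(1)},\dots,e^{(m)}\}$. If $e^{(1)},\dots,e^{(m)}$ are linearly independent, let $H$ be the affine hyperplane through them; if for every $j$ the hyperplane $H$ meets the $j$-th coordinate axis in exactly one point $I_j u_j$ ($u_j$ the $j$-th unit vector) with $\varepsilon_{\mathrm{nad}}\le I_j\le y^{\max}_j$, set $y^{\mathrm{nad}}_j=I_j$ for all $j$. Otherwise (including linear dependence) set $y^{\mathrm{nad}}_j=\max_{x\in F^1_t}f_j(x)$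 for all $j$. Afterwards, for every $j$ with $y^{\mathrm{nad}}_j<y^{\min}_j+\varepsilon_{\mathrm{nad}}$, reset $y^{\mathrm{nad}}_j=\max_{x\in R_t}f_j(x)$. The normalized objectives are $f^n_j(x)=(f_j(x)-y^{\min}_j)/(y^{\mathrm{nad}}_j-y^{\min}_j)$ (with the convention $f^n_j(x):=0$ if the denominator is $0$), $f^n=(f^n_1,\dots,f^n_m)$. (4) Association: each $x\in Y_t\cup F^{i^*}_t$ is associated with a reference point $\mathrm{rp}(x)\in\mathcal R_p$ minimizing the Euclidean distance from $f^n(x)$ to the line $\{\lambda r:\lambda\in\mathbb R\}$ (equivalently, minimizing the angle between $f^n(x)$ and $r$); ties are broken by a deterministic rule depending only on $f^n(x)$. (5) Selection: let $\rho_r=|\{x\in Y_t:\mathrm{rp}(x)=r\}|$ for $r\in\mathcal R_p$, $\tilde F=\emptyset$, $R'=\mathcal R_p$. Repeat: choose $r\in R'$ with minimal $\rho_r$ (ties uniformly at random); if some $x\in F^{i^*}_t\setminus\tilde F$ has $\mathrm{rp}(x)=r$, add to $\tilde F$ such an $x$ minimizing the distance between $f^n(x)$ and $r$ (ties uniformly at random), increase $\rho_r$ by one, and stop as soon as $|Y_t|+|\tilde F|=\mu$; otherwise remove $r$ from $R'$. Set $P_{t+1}=Y_t\cup\tilde F$. *)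

theory Defs
  imports "HOL-Probability.Probability" "HOL-Library.Multiset"
begin

text \<open>Objectives are indexed by a finite type 'm (so m = CARD('m)); bit strings of
  length n are boolean lists of length n.\<close>

definition wdom :: "('a \<Rightarrow> 'm \<Rightarrow> nat) \<Rightarrow> 'a \<Rightarrow> 'a \<Rightarrow> bool" where
  "wdom f x y \<longleftrightarrow> (\<forall>j. f x j \<ge> f y j)"

definition sdom :: "('a \<Rightarrow> 'm \<Rightarrow> nat) \<Rightarrow> 'a \<Rightarrow> 'a \<Rightarrow> bool" where
  "sdom f x y \<longleftrightarrow> wdom f x y \<and> (\<exists>j. f x j > f y j)"

definition incomparable :: "('a \<Rightarrow> 'm \<Rightarrow> nat) \<Rightarrow> 'a \<Rightarrow> 'a \<Rightarrow> bool" where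
  "incomparable f x y \<longleftrightarrow> \<not> wdom f x y \<and> \<not> wdom f y x"

definition mutually_incomparable :: "('a \<Rightarrow> 'm \<Rightarrow> nat) \<Rightarrow> 'a set \<Rightarrow> bool" where
  "mutually_incomparable f S \<longleftrightarrow> (\<forall>x\<in>S. \<forall>y\<in>S. x \<noteq> y \<longrightarrow> incomparable f x y)"

definition max_incomparable_set :: "(bool list \<Rightarrow> 'm \<Rightarrow> nat) \<Rightarrow> nat \<Rightarrow> bool list set \<Rightarrow> bool" where
  "max_incomparable_set f n S \<longleftrightarrow>
     S \<subseteq> {x. length x = n} \<and> mutually_incomparable f S \<and>
     (\<forall>T. T \<subseteq> {x. length x = n} \<and> mutually_incomparable f T \<longrightarrow> card T \<le> card S)"

definition fmax :: "(bool list \<Rightarrow> 'm::finite \<Rightarrow> nat) \<Rightarrow> nat \<Rightarrow> nat" where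
  "fmax f n = Max {f x j | x j. length x = n}"

definition refset :: "nat \<Rightarrow> (real^'m::finite) set" where
  "refset p = {(\<chi> i. real (a i) / real p) | a. (\<Sum>i\<in>UNIV. a i) = p}"

section \<open>Offspring generation (support of the random process)\<close>

primrec mutate :: "nat \<Rightarrow> bool list \<Rightarrow> bool list pmf" where
  "mutate n [] = return_pmf []"
| "mutate n (b # bs) = bind_pmf (bernoulli_pmf (1 / real n))
      (\<lambda>c. map_pmf (\<lambda>r. (b \<noteq> c) # r) (mutate n bs))"

text \<open>Possible offspring multisets: mu offspring, each in the support of
  "pick a parent uniformly from P, then mutate" (independence makes every such
  combination possible).\<close>
definition offspring_ok :: "nat \<Rightarrow> nat \<Rightarrow> bool list multiset \<Rightarrow> bool list multiset \<Rightarrow> bool" where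
  "offspring_ok n \<mu> P Q \<longleftrightarrow> size Q = \<mu> \<and> (\<forall>y\<in>#Q. \<exists>x\<in>#P. y \<in> set_pmf (mutate n x))"

section \<open>Non-dominated sorting (layers are 0-indexed: front f R 0 = F^1)\<close>

definition nd :: "('a \<Rightarrow> 'm \<Rightarrow> nat) \<Rightarrow> 'a multiset \<Rightarrow> 'a multiset" where
  "nd f R = filter_mset (\<lambda>x. \<not> (\<exists>y\<in>#R. sdom f y x)) R"

primrec rest :: "('a \<Rightarrow> 'm \<Rightarrow> nat) \<Rightarrow> 'a multiset \<Rightarrow> nat \<Rightarrow> 'a multiset" where
  "rest f R 0 = R"
| "rest f R (Suc k) = rest f R k - nd f (rest f R k)"

definition front :: "('a \<Rightarrow> 'm \<Rightarrow> nat) \<Rightarrow> 'a multiset \<Rightarrow> nat \<Rightarrow> 'a multiset" where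
  "front f R k = nd f (rest f R k)"

text \<open>critical layer index (0-indexed i^* - 1): least k with |F_0|+...+|F_k| >= mu\<close>
definition istar :: "('a \<Rightarrow> 'm \<Rightarrow> nat) \<Rightarrow> 'a multiset \<Rightarrow> nat \<Rightarrow> nat" where
  "istar f R \<mu> = (LEAST k. size (R - rest f R (Suc k)) \<ge> \<mu>)"

definition fvec :: "(bool list \<Rightarrow> 'm::finite \<Rightarrow> nat) \<Rightarrow> bool list \<Rightarrow> real^'m" where
  "fvec f x = (\<chi> j. real (f x j))"

definition intercept :: "(real^'m::finite) set \<Rightarrow> 'm \<Rightarrow> real" where
  "intercept H j = (THE l. l *\<^sub>R axis j (1::real) \<in> H)"

text \<open>Extreme points are given as options; None stands for the dummy point
  (-inf,...,-inf) of E_0. If any chosen extreme point is the dummy point, the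
  hyperplane construction fails.\<close>
definition hyp_ok :: "real \<Rightarrow> ('m::finite \<Rightarrow> real) \<Rightarrow> ('m \<Rightarrow> (real^'m) option) \<Rightarrow> bool" where
  "hyp_ok eps ymax e \<longleftrightarrow>
     (\<forall>j. e j \<noteq> None) \<and>
     inj (\<lambda>j. the (e j)) \<and> independent (range (\<lambda>j. the (e j))) \<and>
     (\<forall>j. \<exists>!l. l *\<^sub>R axis j (1::real) \<in> affine hull (range (\<lambda>j. the (e j)))) \<and>
     (\<forall>j. eps \<le> intercept (affine hull (range (\<lambda>j. the (e j)))) j \<and>
          intercept (affine hull (range (\<lambda>j. the (e j)))) j \<le> ymax j)"

definition nadir0 :: "(bool list \<Rightarrow> 'm::finite \<Rightarrow> nat) \<Rightarrow> real \<Rightarrow> ('m \<Rightarrow> real) \<Rightarrow>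
    ('m \<Rightarrow> (real^'m) option) \<Rightarrow> bool list multiset \<Rightarrow> 'm \<Rightarrow> real" where
  "nadir0 f eps ymax e F1 j =
     (if hyp_ok eps ymax e then intercept (affine hull (range (\<lambda>j. the (e j)))) j
      else real (Max ((\<lambda>x. f x j) ` set_mset F1)))"

definition nadir :: "(bool list \<Rightarrow> 'm::finite \<Rightarrow> nat) \<Rightarrow> real \<Rightarrow> ('m \<Rightarrow> real) \<Rightarrow> ('m \<Rightarrow> real) \<Rightarrow>
    ('m \<Rightarrow> (real^'m) option) \<Rightarrow> bool list multiset \<Rightarrow> bool list multiset \<Rightarrow> 'm \<Rightarrow> real" where
  "nadir f eps ymin ymax e F1 R j =
     (if nadir0 f eps ymax e F1 j < ymin j + eps
      then real (Max ((\<lambda>x. f x j) ` set_mset R))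
      else nadir0 f eps ymax e F1 j)"

text \<open>Normalized objective vector (division by 0 yields 0 in Isabelle, matching the
  convention).\<close>
definition normf :: "(bool list \<Rightarrow> 'm::finite \<Rightarrow> nat) \<Rightarrow> ('m \<Rightarrow> real) \<Rightarrow> ('m \<Rightarrow> real) \<Rightarrow>
    bool list \<Rightarrow> real^'m" where
  "normf f ymin ynad x = (\<chi> j. (real (f x j) - ymin j) / (ynad j - ymin j))"

definition assoc_rule :: "nat \<Rightarrow> (real^'m::finite \<Rightarrow> real^'m) \<Rightarrow> bool" where
  "assoc_rule p A \<longleftrightarrow> (\<forall>v. A v \<in> refset p \<and>
      (\<forall>r\<in>refset p. infdist v (span {A v}) \<le> infdist v (span {r})))"

section \<open>Selection (all possible outcomes of the randomized niching loop)\<close>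

inductive sel_reach :: "(real^'m::finite) set \<Rightarrow> (bool list \<Rightarrow> real^'m) \<Rightarrow> (bool list \<Rightarrow> real^'m) \<Rightarrow>
    bool list multiset \<Rightarrow> bool list multiset \<Rightarrow> nat \<Rightarrow>
    ((real^'m \<Rightarrow> nat) \<times> bool list multiset \<times> (real^'m) set) \<Rightarrow> bool"
  for Rp rp nv Fi Y \<mu> where
  init: "sel_reach Rp rp nv Fi Y \<mu> (\<lambda>r. size (filter_mset (\<lambda>x. rp x = r) Y), {#}, Rp)"
| add: "\<lbrakk> sel_reach Rp rp nv Fi Y \<mu> (\<rho>, Ft, R'); size Y + size Ft < \<mu>;
          r \<in> R'; \<forall>r'\<in>R'. \<rho> r \<le> \<rho> r';
          x \<in># Fi - Ft; rp x = r;
          \<forall>x'\<in># Fi - Ft. rp x' = r \<longrightarrow> dist (nv x) r \<le> dist (nv x') r \<rbrakk>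
        \<Longrightarrow> sel_reach Rp rp nv Fi Y \<mu> (\<rho>(r := \<rho> r + 1), Ft + {#x#}, R')"
| remove: "\<lbrakk> sel_reach Rp rp nv Fi Y \<mu> (\<rho>, Ft, R'); size Y + size Ft < \<mu>;
          r \<in> R'; \<forall>r'\<in>R'. \<rho> r \<le> \<rho> r';
          \<not> (\<exists>x\<in># Fi - Ft. rp x = r) \<rbrakk>
        \<Longrightarrow> sel_reach Rp rp nv Fi Y \<mu> (\<rho>, Ft, R' - {r})"

definition sel_outcome :: "(real^'m::finite) set \<Rightarrow> (bool list \<Rightarrow> real^'m) \<Rightarrow> (bool list \<Rightarrow> real^'m) \<Rightarrow>
    bool list multiset \<Rightarrow> bool list multiset \<Rightarrow> nat \<Rightarrow> bool list multiset \<Rightarrow> bool" where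
  "sel_outcome Rp rp nv Fi Y \<mu> P' \<longleftrightarrow>
     (\<exists>\<rho> Ft R'. sel_reach Rp rp nv Fi Y \<mu> (\<rho>, Ft, R') \<and> size Y + size Ft = \<mu> \<and> P' = Y + Ft)"

definition gen_step :: "(bool list \<Rightarrow> 'm::finite \<Rightarrow> nat) \<Rightarrow> nat \<Rightarrow> nat \<Rightarrow> real \<Rightarrow> nat \<Rightarrow>
    (real^'m \<Rightarrow> real^'m) \<Rightarrow> ('m \<Rightarrow> real) \<Rightarrow> ('m \<Rightarrow> real) \<Rightarrow> (real^'m) option set \<Rightarrow>
    bool list multiset \<Rightarrow> bool list multiset \<Rightarrow> ('m \<Rightarrow> (real^'m) option) \<Rightarrow>
    bool list multiset \<Rightarrow> bool" where
  "gen_step f n \<mu> eps p A ymin ymax Eprev P Q e P' \<longleftrightarrow>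
     offspring_ok n \<mu> P Q \<and>
     (let R = P + Q; k = istar f R \<mu>; Y = R - rest f R k; Fi = front f R k;
          F1 = front f R 0;
          ynad = nadir f eps ymin ymax e F1 R;
          nv = normf f ymin ynad;
          rp = (\<lambda>x. A (nv x))
      in (\<forall>j. e j \<in> Some ` fvec f ` set_mset (Y + Fi) \<union> Eprev) \<and>
         sel_outcome (refset p) rp nv Fi Y \<mu> P')"

definition ymin_run :: "(bool list \<Rightarrow> 'm \<Rightarrow> nat) \<Rightarrow> (nat \<Rightarrow> bool list multiset) \<Rightarrow>
    (nat \<Rightarrow> bool list multiset) \<Rightarrow> nat \<Rightarrow> 'm \<Rightarrow> real" where
  "ymin_run f P Q t j = real (Min {f x j | x s. s \<le> t \<and> x \<in># P s + Q s})"

definition ymax_run :: "(bool list \<Rightarrow> 'm \<Rightarrow> nat) \<Rightarrow> (nat \<Rightarrow> bool list multiset) \<Rightarrow>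
    (nat \<Rightarrow> bool list multiset) \<Rightarrow> nat \<Rightarrow> 'm \<Rightarrow> real" where
  "ymax_run f P Q t j = real (Max {f x j | x s. s \<le> t \<and> x \<in># front f (P s + Q s) 0})"

fun Eset :: "(nat \<Rightarrow> 'm \<Rightarrow> (real^'m::finite) option) \<Rightarrow> nat \<Rightarrow> (real^'m) option set" where
  "Eset e 0 = {None}"
| "Eset e (Suc t) = range (e t)"

text \<open>A possible run of NSGA-III: P t are the populations, Q t the offspring,
  e t the extreme points chosen in generation t.\<close>
definition nsga3_run :: "(bool list \<Rightarrow> 'm::finite \<Rightarrow> nat) \<Rightarrow> nat \<Rightarrow> nat \<Rightarrow> real \<Rightarrow> nat \<Rightarrow>
    (real^'m \<Rightarrow> real^'m) \<Rightarrow> (nat \<Rightarrow> bool list multiset) \<Rightarrow> (nat \<Rightarrow> bool list multiset) \<Rightarrow>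
    (nat \<Rightarrow> 'm \<Rightarrow> (real^'m) option) \<Rightarrow> bool" where
  "nsga3_run f n \<mu> eps p A P Q e \<longleftrightarrow>
     size (P 0) = \<mu> \<and> set_mset (P 0) \<subseteq> {x. length x = n} \<and>
     (\<forall>t. gen_step f n \<mu> eps p A (ymin_run f P Q t) (ymax_run f P Q t) (Eset e t)
            (P t) (Q t) (e t) (P (Suc t)))"

end

theory Submission
  imports Defs
begin


lemma round_exists:
  fixes w :: "'a \<Rightarrow> real" and K :: "'a set"
  assumes "finite K" "\<forall>k\<in>K. w k \<ge> 0"
  shows "\<exists>a::'a\<Rightarrow>int. (\<Sum>k\<in>K. a k) = \<lfloor>\<Sum>k\<in>K. w k\<rfloor> \<and> (\<forall>k\<in>K. a k \<ge> 0 \<and> \<bar>real_of_int (a k) - w k\<bar> < 1)"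
  using assms
proof (induction K rule: finite_induct)
  case empty
  then show ?case by simp
next
  case (insert k K)
  then obtain a where a: "(\<Sum>k\<in>K. a k) = \<lfloor>\<Sum>k\<in>K. w k\<rfloor>" "\<forall>k\<in>K. a k \<ge> 0 \<and> \<bar>real_of_int (a k) - w k\<bar> < 1" by auto
  define W where "W = (\<Sum>k\<in>K. w k)"
  define a' where "a' = a(k := \<lfloor>W + w k\<rfloor> - \<lfloor>W\<rfloor>)"
  have s: "(\<Sum>k\<in>K. a' k) = (\<Sum>k\<in>K. a k)" unfolding a'_def using insert(2) by (intro sum.cong) auto
  have wk: "w k \<ge> 0" using insert by auto
  have ak: "a' k = \<lfloor>W + w k\<rfloor> - \<lfloor>W\<rfloor>" unfolding a'_def by simp
  have e1: "\<bar>real_of_int (a' k) - w k\<bar> < 1" unfolding ak abs_less_iff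
    using floor_correct[of "W + w k"] floor_correct[of W] by linarith
  have e2: "a' k \<ge> 0" unfolding a'_def using wk by (simp add: floor_mono)
  have S: "(\<Sum>k\<in>insert k K. a' k) = \<lfloor>\<Sum>k\<in>insert k K. w k\<rfloor>"
    using insert(1,2) s a(1) ak unfolding W_def by (simp add: add.commute)
  have B: "\<forall>k'\<in>insert k K. a' k' \<ge> 0 \<and> \<bar>real_of_int (a' k') - w k'\<bar> < 1"
    using a(2) e1 e2 insert(2) by (auto simp: a'_def)
  show ?case using S B by blast
qed

lemma norm_lt_bound:
  fixes x :: "real^'m::finite"
  assumes "\<forall>k. \<bar>x$k\<bar> < c"
  shows "norm x < sqrt (real CARD('m)) * c"
proof -
  have c0: "c > 0" using assms abs_ge_zero order.strict_trans1 by blast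
  have "(\<Sum>i\<in>UNIV. (norm (x$i))\<^sup>2) < (\<Sum>i\<in>(UNIV::'m set). c\<^sup>2)"
  proof (rule sum_strict_mono)
    fix i :: 'm
    show "(norm (x$i))\<^sup>2 < c\<^sup>2" using assms[rule_format, of i]
      using power_strict_mono[of "\<bar>x$i\<bar>" c 2] by simp
  qed auto
  then have "norm x < sqrt (real CARD('m) * c\<^sup>2)"
    unfolding norm_vec_def L2_set_def by (simp add: real_sqrt_less_mono)
  also have "\<dots> = sqrt (real CARD('m)) * c" using c0 by (simp add: real_sqrt_mult)
  finally show ?thesis .
qed

lemma near_ref:
  fixes u :: "real^'m::finite"
  assumes p: "p > 0" and u: "\<forall>k. 0 \<le> u$k \<and> u$k \<le> 1"
  shows "\<exists>r\<in>refset p. infdist u (span {r}) < real CARD('m) * sqrt (real CARD('m)) / real p"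
proof -
  define m where "m = real CARD('m)"
  have m0: "m > 0" unfolding m_def by simp
  define s where "s = (\<Sum>k\<in>UNIV. u$k)"
  have s0: "s \<ge> 0" unfolding s_def using u by (simp add: sum_nonneg)
  have sm: "s \<le> m" unfolding s_def m_def using sum_mono[of UNIV "\<lambda>k. u$k" "\<lambda>k. 1"] u by simp
  define w where "w k = (if s = 0 then real p / m else real p * u$k / s)" for k
  have w0: "\<forall>k\<in>UNIV. w k \<ge> 0" unfolding w_def using u s0 m0 by auto
  have ws: "(\<Sum>k\<in>UNIV. w k) = real p"
  proof (cases "s = 0")
    case True then show ?thesis unfolding w_def using m0 by (simp add: m_def)
  next
    case False
    then have "(\<Sum>k\<in>UNIV. w k) = real p / s * (\<Sum>k\<in>UNIV. u$k)"
      unfolding w_def by (simp add: sum_distrib_left)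
    then show ?thesis using False unfolding s_def by simp
  qed
  obtain a :: "'m \<Rightarrow> int" where a: "(\<Sum>k\<in>UNIV. a k) = int p"
     "\<forall>k. a k \<ge> 0 \<and> \<bar>real_of_int (a k) - w k\<bar> < 1"
    using round_exists[of UNIV w] w0 ws by auto
  define an where "an k = nat (a k)" for k
  have ank: "real (an k) = real_of_int (a k)" for k unfolding an_def using a(2) by simp
  have "int (\<Sum>k\<in>UNIV. an k) = (\<Sum>k\<in>UNIV. a k)"
    unfolding an_def of_nat_sum using a(2) by simp
  then have ansum: "(\<Sum>k\<in>UNIV. an k) = p" using a(1) by linarith
  define r where "r = (\<chi> i. real (an i) / real p)"
  have rin: "r \<in> refset p" unfolding refset_def r_def using ansum by blast
  show ?thesis
  proof (cases "s = 0")
    case True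
    then have "\<forall>k\<in>UNIV. u$k = 0" using u sum_nonneg_eq_0_iff[of UNIV "\<lambda>k. u$k"] unfolding s_def by auto
    then have "u = 0" by (simp add: vec_eq_iff)
    then have "infdist u (span {r}) = 0" by (simp add: span_zero)
    moreover have "real CARD('m) * sqrt (real CARD('m)) / real p > 0" using p by simp
    ultimately show ?thesis using rin by (intro bexI[of _ r]) auto
  next
    case False
    then have sp: "s > 0" using s0 by simp
    define y where "y = s *\<^sub>R r"
    have yin: "y \<in> span {r}" unfolding y_def by (simp add: span_base span_mul)
    have comp: "\<bar>(u - y)$k\<bar> < s / real p" for k
    proof -
      have "(u - y)$k = (s / real p) * (w k - real (an k))"
        unfolding y_def r_def w_def using False p by (simp add: field_simps)
      then have "\<bar>(u - y)$k\<bar> = (s / real p) * \<bar>w k - real (an k)\<bar>"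
        using sp p by (simp add: abs_mult)
      also have "\<dots> < (s / real p) * 1"
        using a(2)[rule_format, of k] ank[of k] sp p by (intro mult_strict_left_mono) (auto simp: abs_minus_commute)
      finally show ?thesis by simp
    qed
    have "infdist u (span {r}) \<le> dist u y" using yin by (rule infdist_le)
    also have "\<dots> = norm (u - y)" by (simp add: dist_norm)
    also have "\<dots> < sqrt m * (s / real p)" unfolding m_def by (rule norm_lt_bound) (use comp in auto)
    also have "\<dots> \<le> sqrt m * (m / real p)"
      using sm p m0 by (intro mult_left_mono divide_right_mono) auto
    finally show ?thesis using rin unfolding m_def by (auto simp: mult.commute)
  qed
qed

lemma close_on_line:
  fixes u :: "real^'m::finite"
  assumes p: "p > 0" and u: "\<forall>k. 0 \<le> u$k \<and> u$k \<le> 1" and A: "assoc_rule p A"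
  shows "\<exists>c. \<forall>k. \<bar>u$k - c * (A u)$k\<bar> < real CARD('m) * sqrt (real CARD('m)) / real p"
proof -
  obtain r where r: "r \<in> refset p" "infdist u (span {r}) < real CARD('m) * sqrt (real CARD('m)) / real p"
    using near_ref[OF p u] by blast
  have "infdist u (span {A u}) \<le> infdist u (span {r})" using A r(1) unfolding assoc_rule_def by blast
  with r(2) have lt: "infdist u (span {A u}) < real CARD('m) * sqrt (real CARD('m)) / real p" by linarith
  obtain x where x: "x \<in> span {A u}" "infdist u (span {A u}) = dist u x"
    using infdist_attains_inf[of "span {A u}" u] span_zero[of "{A u}"] by blast
  obtain c where c: "x = c *\<^sub>R A u" using x(1) unfolding span_singleton by auto
  have "\<bar>u$k - c * (A u)$k\<bar> < real CARD('m) * sqrt (real CARD('m)) / real p" for k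
  proof -
    have "\<bar>(u - x)$k\<bar> \<le> norm (u - x)" by (rule component_le_norm_cart)
    also have "\<dots> = dist u x" by (simp add: dist_norm)
    finally show ?thesis using lt x(2) c by simp
  qed
  then show ?thesis by blast
qed

lemma refset_nonneg: "r \<in> refset p \<Longrightarrow> r$k \<ge> 0"
  unfolding refset_def by (auto intro!: divide_nonneg_nonneg sum_nonneg)

lemma lin_helper:
  fixes a x y z e g :: real
  assumes "a = x + y + z" "x < e" "z < e" "a \<ge> g" "e \<le> h" "g = h + h" "y \<le> 0"
  shows False
  using assms by linarith

lemma geo:
  fixes u v :: "real^'m::finite" and F :: real
  assumes F: "F \<ge> 1" and p: "real p \<ge> 2 * real CARD('m) powr (3/2) * F"
    and u: "\<forall>k. 0 \<le> u$k \<and> u$k \<le> 1" and v: "\<forall>k. 0 \<le> v$k \<and> v$k \<le> 1"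
    and ij: "u$i - v$i \<ge> 1/F" "v$j - u$j \<ge> 1/F"
    and A: "assoc_rule p A"
  shows "A u \<noteq> A v"
proof
  assume eq: "A u = A v"
  define m where "m = real CARD('m)"
  have m0: "m \<ge> 1" unfolding m_def by simp
  have pw: "real CARD('m) powr (3/2) = m * sqrt m"
  proof -
    have "m powr (3/2) = m powr (1 + 1/2)" by simp
    also have "\<dots> = m * m powr (1/2)" using m0 by (simp only: powr_add powr_one)
    also have "\<dots> = m * sqrt m" using m0 by (simp add: powr_half_sqrt)
    finally show ?thesis unfolding m_def .
  qed
  have msq: "m * sqrt m \<ge> 1" using m0 mult_mono[of 1 m 1 "sqrt m"] by simp
  have "m * sqrt m * F \<ge> 1 * 1" using msq F by (intro mult_mono) auto
  moreover have "real p \<ge> 2 * (m * sqrt m * F)" using p pw by (simp add: mult.assoc)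
  ultimately have pp: "real p > 0" by linarith
  then have p0: "p > 0" by simp
  have bnd: "m * sqrt m / real p \<le> 1 / (2 * F)"
    using p pw pp F by (simp add: field_simps)
  obtain c where c: "\<forall>k. \<bar>u$k - c * (A u)$k\<bar> < m * sqrt m / real p"
    using close_on_line[OF p0 u A] unfolding m_def by blast
  obtain d where d: "\<forall>k. \<bar>v$k - d * (A u)$k\<bar> < m * sqrt m / real p"
    using close_on_line[OF p0 v A] eq unfolding m_def by auto
  have Ain: "A u \<in> refset p" using A unfolding assoc_rule_def by blast
  have nn: "(A u)$k \<ge> 0" for k using refset_nonneg[OF Ain] .
  show False
  proof (cases "c \<le> d")
    case True
    have "(c - d) * (A u)$i \<le> 0" using True nn[of i] by (simp add: mult_nonpos_nonneg)
    have "u$i - v$i = (u$i - c * (A u)$i) + (c - d) * (A u)$i + (d * (A u)$i - v$i)"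
      by (simp add: algebra_simps)
    moreover have "1/F = 1/(2*F) + 1/(2*F)" by simp
    moreover have "u$i - c * (A u)$i < m * sqrt m / real p" using c[rule_format, of i] unfolding abs_less_iff by linarith
    moreover have "d * (A u)$i - v$i < m * sqrt m / real p" using d[rule_format, of i] unfolding abs_less_iff by linarith
    ultimately show False using lin_helper ij(1) bnd \<open>(c - d) * (A u)$i \<le> 0\<close> by blast
  next
    case False
    have "(d - c) * (A u)$j \<le> 0" using False nn[of j] by (simp add: mult_nonpos_nonneg)
    have "v$j - u$j = (v$j - d * (A u)$j) + (d - c) * (A u)$j + (c * (A u)$j - u$j)"
      by (simp add: algebra_simps)
    moreover have "1/F = 1/(2*F) + 1/(2*F)" by simp
    moreover have "v$j - d * (A u)$j < m * sqrt m / real p" using d[rule_format, of j] unfolding abs_less_iff by linarith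
    moreover have "c * (A u)$j - u$j < m * sqrt m / real p" using c[rule_format, of j] unfolding abs_less_iff by linarith
    ultimately show False using lin_helper ij(2) bnd \<open>(d - c) * (A u)$j \<le> 0\<close> by blast
  qed
qed



lemma sel_sub:
  assumes "sel_reach Rp rp nv Fi Y \<mu> st"
  shows "fst (snd st) \<subseteq># Fi"
  using assms
proof (induction rule: sel_reach.induct)
  case init
  then show ?case by simp
next
  case (add \<rho> Ft R' r x)
  then show ?case
    by (auto simp: subseteq_mset_def in_diff_count)
next
  case (remove \<rho> Ft R' r)
  then show ?case by simp
qed

lemma count_le_card:
  assumes "\<forall>r. size (filter_mset (\<lambda>z. g z = r) M) \<le> 1"
  shows "size M \<le> card (g ` set_mset M)"
  using assms
proof (induction M)
  case empty
  then show ?case by simp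
next
  case (add x M)
  have "\<forall>r. size (filter_mset (\<lambda>z. g z = r) M) \<le> 1"
  proof
    fix r
    have "size (filter_mset (\<lambda>z. g z = r) M) \<le> size (filter_mset (\<lambda>z. g z = r) (add_mset x M))"
      by simp
    then show "size (filter_mset (\<lambda>z. g z = r) M) \<le> 1" using add(2) by (meson order_trans)
  qed
  then have IH: "size M \<le> card (g ` set_mset M)" using add(1) by blast
  have "g x \<notin> g ` set_mset M"
  proof
    assume "g x \<in> g ` set_mset M"
    then obtain y where y: "y \<in># M" "g y = g x" by auto
    then have "filter_mset (\<lambda>z. g z = g x) M \<noteq> {#}" using y by auto
    then have "size (filter_mset (\<lambda>z. g z = g x) M) \<noteq> 0" by (metis size_eq_0_iff_empty)
    then have "size (filter_mset (\<lambda>z. g z = g x) M) \<ge> 1" by linarith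
    then have "size (filter_mset (\<lambda>z. g z = g x) (add_mset x M)) \<ge> 2" by simp
    moreover have "size (filter_mset (\<lambda>z. g z = g x) (add_mset x M)) \<le> 1" using add(2) by blast
    ultimately show False by linarith
  qed
  then show ?case using IH by simp
qed

lemma sel_inv:
  assumes "sel_reach Rp rp nv Fi {#} \<mu> st" "x \<in># Fi" "rp x \<in> Rp"
  shows "case st of (\<rho>, Ft, R') \<Rightarrow>
     (\<forall>r. \<rho> r = size (filter_mset (\<lambda>z. rp z = r) Ft)) \<and>
     (\<forall>r\<in>Rp - R'. \<not>(\<exists>z\<in>#Fi - Ft. rp z = r)) \<and>
     (\<rho> (rp x) = 0 \<longrightarrow> (\<forall>r. \<rho> r \<le> 1))"
  using assms
proof (induction rule: sel_reach.induct)
  case init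
  then show ?case by simp
next
  case (add \<rho> Ft R' r y)
  have I: "\<forall>r. \<rho> r = size (filter_mset (\<lambda>z. rp z = r) Ft)"
     "\<forall>r\<in>Rp - R'. \<not>(\<exists>z\<in>#Fi - Ft. rp z = r)"
     "\<rho> (rp x) = 0 \<longrightarrow> (\<forall>r. \<rho> r \<le> 1)" using add.IH[OF add.prems] unfolding case_prod_conv by blast+
  have c1: "\<forall>r'. (\<rho>(r := \<rho> r + 1)) r' = size (filter_mset (\<lambda>z. rp z = r') (Ft + {#y#}))"
    using I(1) add.hyps(6) by auto
  have c2: "\<forall>r'\<in>Rp - R'. \<not>(\<exists>z\<in>#Fi - (Ft + {#y#}). rp z = r')"
  proof -
    have "\<forall>z. z \<in># Fi - (Ft + {#y#}) \<longrightarrow> z \<in># Fi - Ft" by (auto simp: in_diff_count)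
    then show ?thesis using I(2) by blast
  qed
  have c3: "(\<rho>(r := \<rho> r + 1)) (rp x) = 0 \<longrightarrow> (\<forall>r'. (\<rho>(r := \<rho> r + 1)) r' \<le> 1)"
  proof
    assume z: "(\<rho>(r := \<rho> r + 1)) (rp x) = 0"
    then have rx: "r \<noteq> rp x" by (auto split: if_splits)
    with z have rho0: "\<rho> (rp x) = 0" by simp
    then have le1: "\<forall>r. \<rho> r \<le> 1" using I(3) by blast
    have "filter_mset (\<lambda>z. rp z = rp x) Ft = {#}" using rho0 I(1) by simp
    then have "x \<notin># Ft" unfolding filter_mset_eq_mempty_iff by blast
    then have "x \<in># Fi - Ft" using add.prems(1) by (simp add: in_diff_count not_in_iff)
    then have "rp x \<in> R'" using I(2) add.prems(2) by blast
    then have "\<rho> r \<le> 0" using add.hyps(4) rho0 by fastforce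
    then show "\<forall>r'. (\<rho>(r := \<rho> r + 1)) r' \<le> 1" using le1 by auto
  qed
  show ?case using c1 c2 c3 by simp
next
  case (remove \<rho> Ft R' r)
  have I: "\<forall>r. \<rho> r = size (filter_mset (\<lambda>z. rp z = r) Ft)"
     "\<forall>r\<in>Rp - R'. \<not>(\<exists>z\<in>#Fi - Ft. rp z = r)"
     "\<rho> (rp x) = 0 \<longrightarrow> (\<forall>r. \<rho> r \<le> 1)" using remove.IH[OF remove.prems] unfolding case_prod_conv by blast+
  have "\<forall>r'\<in>Rp - (R' - {r}). \<not>(\<exists>z\<in>#Fi - Ft. rp z = r')"
    using I(2) remove.hyps(5) by blast
  then show ?case using I(1,3) by simp
qed

lemma sel_final:
  assumes "sel_reach Rp rp nv Fi {#} \<mu> (\<rho>, Ft, R')" "size Ft = \<mu>" "x \<in># Fi" "rp x \<in> Rp"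
    "card (rp ` set_mset Fi) \<le> \<mu>"
  shows "\<exists>x'\<in>#Ft. rp x' = rp x"
proof (rule ccontr)
  assume no: "\<not> (\<exists>x'\<in>#Ft. rp x' = rp x)"
  have I: "\<forall>r. \<rho> r = size (filter_mset (\<lambda>z. rp z = r) Ft)"
     "\<rho> (rp x) = 0 \<longrightarrow> (\<forall>r. \<rho> r \<le> 1)"
    using sel_inv[OF assms(1,3,4)] unfolding case_prod_conv by blast+
  have sub: "Ft \<subseteq># Fi" using sel_sub[OF assms(1)] by simp
  have "filter_mset (\<lambda>z. rp z = rp x) Ft = {#}" using no by (simp add: filter_mset_eq_mempty_iff)
  then have "\<rho> (rp x) = 0" using I(1) by simp
  then have "\<forall>r. \<rho> r \<le> 1" using I(2) by blast
  then have "\<forall>r. size (filter_mset (\<lambda>z. rp z = r) Ft) \<le> 1" using I(1) by simp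
  then have s1: "size Ft \<le> card (rp ` set_mset Ft)" by (rule count_le_card)
  have "rp ` set_mset Ft \<subseteq> rp ` set_mset Fi - {rp x}" using no sub by (auto dest: mset_subset_eqD)
  then have "card (rp ` set_mset Ft) \<le> card (rp ` set_mset Fi - {rp x})" by (intro card_mono) auto
  also have "\<dots> = card (rp ` set_mset Fi) - 1" using assms(3) by (simp add: card_Diff_singleton)
  finally have "size Ft \<le> card (rp ` set_mset Fi) - 1" using s1 by linarith
  moreover have "card (rp ` set_mset Fi) \<ge> 1" using assms(3)
    by (auto simp: Suc_le_eq card_gt_0_iff)
  ultimately show False using assms(2,5) by linarith
qed



lemma mutate_length: "y \<in> set_pmf (mutate n x) \<Longrightarrow> length y = length x"
  by (induction x arbitrary: y) auto

lemma nd_sub: "nd f M \<subseteq># M"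
  unfolding nd_def by (rule multiset_filter_subset)

lemma rest_sub: "rest f R k \<subseteq># R"
  by (induction k) (auto intro: subset_mset.order_trans[OF diff_subset_eq_self])

lemma rest_Suc_sub: "rest f R (Suc k) \<subseteq># rest f R k"
  by simp

lemma rest_anti: "k \<ge> 1 \<Longrightarrow> rest f R k \<subseteq># rest f R 1"
proof (induction k)
  case 0 then show ?case by simp
next
  case (Suc k)
  then show ?case
    by (cases "k = 0") (auto intro: subset_mset.order_trans[OF diff_subset_eq_self])
qed

lemma in_nd: "z \<in># nd f R \<longleftrightarrow> z \<in># R \<and> \<not> (\<exists>y\<in>#R. sdom f y z)"
  unfolding nd_def by auto

lemma nd_incomp:
  assumes "z \<in># nd f R" "z' \<in># nd f R" "f z \<noteq> f z'"
  shows "\<not> wdom f z z'"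
proof
  assume w: "wdom f z z'"
  obtain j where "f z j \<noteq> f z' j" using assms(3) by auto
  moreover have "f z' j \<le> f z j" using w unfolding wdom_def by blast
  ultimately have "f z j > f z' j" by linarith
  with w have "sdom f z z'" unfolding sdom_def by blast
  then show False using assms(1,2) unfolding in_nd by blast
qed

lemma fmax_ge:
  fixes f :: "bool list \<Rightarrow> 'm::finite \<Rightarrow> nat"
  assumes "length x = n"
  shows "f x j \<le> fmax f n"
proof -
  have "{f x j | x j. length x = n} \<subseteq> (\<lambda>(x, j). f x j) ` ({x. length x = n} \<times> (UNIV::'m set))" by auto
  moreover have "finite ((\<lambda>(x, j). f x j) ` ({x::bool list. length x = n} \<times> (UNIV::'m set)))"
    using finite_lists_length_eq[of "UNIV::bool set" n] by (intro finite_imageI finite_cartesian_product) auto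
  ultimately have "finite {f x j | x j. length x = n}" by (rule finite_subset)
  then show ?thesis unfolding fmax_def using assms by (intro Max_ge) auto
qed

lemma nv_facts:
  fixes c D F :: real
  assumes H1: "\<forall>y\<in>#R. c \<le> real (f y j)" and H2: "\<forall>y\<in>#R. real (f y j) \<le> D" and H3: "D - c \<le> F"
  shows "\<forall>y\<in>#R. 0 \<le> (real (f y j) - c) / (D - c) \<and> (real (f y j) - c) / (D - c) \<le> 1"
    and "\<forall>y\<in>#R. \<forall>z\<in>#R. f y j < f z j \<longrightarrow> (real (f z j) - c) / (D - c) - (real (f y j) - c) / (D - c) \<ge> 1 / F"
proof -
  show "\<forall>y\<in>#R. 0 \<le> (real (f y j) - c) / (D - c) \<and> (real (f y j) - c) / (D - c) \<le> 1"
  proof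
    fix y assume y: "y \<in># R"
    have a: "c \<le> real (f y j)" "real (f y j) \<le> D" using H1 H2 y by auto
    then show "0 \<le> (real (f y j) - c) / (D - c) \<and> (real (f y j) - c) / (D - c) \<le> 1"
      by (cases "D - c = 0") (auto simp: divide_le_eq_1)
  qed
  show "\<forall>y\<in>#R. \<forall>z\<in>#R. f y j < f z j \<longrightarrow> (real (f z j) - c) / (D - c) - (real (f y j) - c) / (D - c) \<ge> 1 / F"
  proof (intro ballI impI)
    fix y z assume y: "y \<in># R" and z: "z \<in># R" and lt: "f y j < f z j"
    have a: "c \<le> real (f y j)" "real (f z j) \<le> D" using H1 H2 y z by auto
    have lt': "real (f y j) + 1 \<le> real (f z j)" using lt by simp
    have dpos: "D - c > 0" using a lt' by linarith
    have "(real (f z j) - c) / (D - c) - (real (f y j) - c) / (D - c) = (real (f z j) - real (f y j)) / (D - c)"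
      by (simp add: diff_divide_distrib)
    also have "\<dots> \<ge> 1 / (D - c)" using lt' dpos by (intro divide_right_mono) auto
    moreover have "1 / (D - c) \<ge> 1 / F" using dpos H3 by (intro divide_left_mono) auto
    ultimately show "(real (f z j) - c) / (D - c) - (real (f y j) - c) / (D - c) \<ge> 1 / F" by linarith
  qed
qed

lemma gen_step_sub:
  assumes "gen_step f n \<mu> eps p A ymin ymax E P Q e P'"
  shows "set_mset P' \<subseteq> set_mset (P + Q)"
proof -
  define R where "R = P + Q"
  define k where "k = istar f R \<mu>"
  have so: "sel_outcome (refset p) (\<lambda>x. A (normf f ymin (nadir f eps ymin ymax e (front f R 0) R) x))
      (normf f ymin (nadir f eps ymin ymax e (front f R 0) R)) (front f R k) (R - rest f R k) \<mu> P'"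
    using assms unfolding gen_step_def Let_def R_def k_def by blast
  then obtain \<rho> Ft R' where st: "sel_reach (refset p) (\<lambda>x. A (normf f ymin (nadir f eps ymin ymax e (front f R 0) R) x))
      (normf f ymin (nadir f eps ymin ymax e (front f R 0) R)) (front f R k) (R - rest f R k) \<mu> (\<rho>, Ft, R')"
     and P': "P' = (R - rest f R k) + Ft"
    unfolding sel_outcome_def by blast
  have "Ft \<subseteq># front f R k" using sel_sub[OF st] by simp
  also have "\<dots> \<subseteq># rest f R k" unfolding front_def by (rule nd_sub)
  also have "\<dots> \<subseteq># R" by (rule rest_sub)
  finally have "set_mset Ft \<subseteq> set_mset R" by (rule set_mset_mono)
  moreover have "set_mset (R - rest f R k) \<subseteq> set_mset R" by (rule set_mset_mono) simp
  ultimately show ?thesis unfolding P' R_def by auto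
qed

lemma run_lengths:
  assumes "nsga3_run f n \<mu> eps p A P Q e"
  shows "set_mset (P t) \<subseteq> {x. length x = n} \<and> set_mset (Q t) \<subseteq> {x. length x = n}"
proof (induction t)
  have gs: "\<And>t. gen_step f n \<mu> eps p A (ymin_run f P Q t) (ymax_run f P Q t) (Eset e t)
            (P t) (Q t) (e t) (P (Suc t))" using assms unfolding nsga3_run_def by blast
  have Qok: "set_mset (Q t) \<subseteq> {x. length x = n}" if "set_mset (P t) \<subseteq> {x. length x = n}" for t
  proof -
    have "offspring_ok n \<mu> (P t) (Q t)" using gs[of t] unfolding gen_step_def by blast
    then show ?thesis using that mutate_length unfolding offspring_ok_def by fastforce
  qed
  {
    case 0
    have "set_mset (P 0) \<subseteq> {x. length x = n}" using assms unfolding nsga3_run_def by blast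
    then show ?case using Qok by blast
  next
    case (Suc t)
    have "set_mset (P (Suc t)) \<subseteq> set_mset (P t + Q t)" using gs[of t] by (rule gen_step_sub)
    then have "set_mset (P (Suc t)) \<subseteq> {x. length x = n}" using Suc by auto
    then show ?case using Qok by blast
  }
qed

theorem lemma4:
  fixes f :: "bool list \<Rightarrow> 'm::finite \<Rightarrow> nat"
    and n \<mu> p :: nat and eps :: real
    and A :: "real^'m \<Rightarrow> real^'m"
    and S :: "bool list set"
    and P Q :: "nat \<Rightarrow> bool list multiset"
    and e :: "nat \<Rightarrow> 'm \<Rightarrow> (real^'m) option"
  assumes "fmax f n \<ge> 1"
    and "eps \<ge> real (fmax f n)"
    and "real p \<ge> 2 * real CARD('m) powr (3/2) * real (fmax f n)"
    and "max_incomparable_set f n S"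
    and "\<mu> \<ge> card S"
    and "assoc_rule p A"
    and "nsga3_run f n \<mu> eps p A P Q e"
  shows "\<forall>x\<in># front f (P t + Q t) 0. \<exists>x'\<in># P (Suc t). \<forall>j. f x' j = f x j"
proof
  fix x assume x0: "x \<in># front f (P t + Q t) 0"
  define F where "F = fmax f n"
  define R where "R = P t + Q t"
  define ymin where "ymin = ymin_run f P Q t"
  define ymax where "ymax = ymax_run f P Q t"
  define k where "k = istar f R \<mu>"
  define Y where "Y = R - rest f R k"
  define Fi where "Fi = front f R k"
  define F1 where "F1 = front f R 0"
  define ynad where "ynad = nadir f eps ymin ymax (e t) F1 R"
  define nv where "nv = normf f ymin ynad"
  define rp where "rp = (\<lambda>x. A (nv x))"
  have gs: "gen_step f n \<mu> eps p A (ymin_run f P Q t) (ymax_run f P Q t) (Eset e t)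
            (P t) (Q t) (e t) (P (Suc t))" using assms(7) unfolding nsga3_run_def by blast
  have so: "sel_outcome (refset p) rp nv Fi Y \<mu> (P (Suc t))"
    using gs unfolding gen_step_def Let_def rp_def nv_def ynad_def F1_def Fi_def Y_def k_def R_def
      ymin_def ymax_def by blast
  have lens: "\<And>s. set_mset (P s) \<subseteq> {x. length x = n} \<and> set_mset (Q s) \<subseteq> {x. length x = n}"
    using run_lengths[OF assms(7)] by blast
  have Rlen: "\<forall>y\<in>#R. length y = n" unfolding R_def using lens[of t] by auto
  have fle: "\<forall>y\<in>#R. \<forall>j. f y j \<le> F" using Rlen fmax_ge unfolding F_def by blast
  have F1nd: "F1 = nd f R" unfolding F1_def front_def by simp
  have x: "x \<in># F1" using x0 unfolding F1_def R_def .
  have F1R: "F1 \<subseteq># R" unfolding F1nd by (rule nd_sub)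
  have xR: "x \<in># R" using x F1R by (auto dest: mset_subset_eqD)
  have Fge: "real F \<ge> 1" using assms(1) unfolding F_def by simp
  have H1: "\<forall>y\<in>#R. ymin j \<le> real (f y j)" for j
  proof
    fix y assume y: "y \<in># R"
    let ?S = "{f x j | x s. s \<le> t \<and> x \<in># P s + Q s}"
    have "?S \<subseteq> {..F}"
    proof
      fix v assume "v \<in> ?S"
      then obtain z s where "v = f z j" "z \<in># P s + Q s" by blast
      then show "v \<in> {..F}" using lens[of s] fmax_ge[of z n f j] unfolding F_def by auto
    qed
    then have "finite ?S" by (rule finite_subset) simp
    moreover have "f y j \<in> ?S" using y unfolding R_def by blast
    ultimately show "ymin j \<le> real (f y j)" unfolding ymin_def ymin_run_def by simp
  qed
  have ymin0: "ymin j \<ge> 0" for j unfolding ymin_def ymin_run_def by simp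
  have ymaxF: "ymax j \<le> real F" for j
  proof -
    let ?T = "{f x j | x s. s \<le> t \<and> x \<in># front f (P s + Q s) 0}"
    have "?T \<subseteq> {..F}"
    proof
      fix v assume "v \<in> ?T"
      then obtain z s where z: "v = f z j" "z \<in># front f (P s + Q s) 0" by blast
      have "front f (P s + Q s) 0 \<subseteq># P s + Q s" unfolding front_def by (simp add: nd_sub)
      then have "z \<in># P s + Q s" using z(2) by (auto dest: mset_subset_eqD)
      then show "v \<in> {..F}" using z(1) lens[of s] fmax_ge[of z n f j] unfolding F_def by auto
    qed
    then have fin: "finite ?T" by (rule finite_subset) simp
    have "f x j \<in> ?T" using x0 by blast
    then have "?T \<noteq> {}" by blast
    then have "Max ?T \<in> ?T" using fin by (rule Max_in[rotated])
    then have "Max ?T \<le> F" using \<open>?T \<subseteq> {..F}\<close> by auto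
    then show ?thesis unfolding ymax_def ymax_run_def by simp
  qed
  have HD: "(\<forall>y\<in>#R. real (f y j) \<le> ynad j) \<and> ynad j - ymin j \<le> real F" for j
  proof (cases "nadir0 f eps ymax (e t) F1 j < ymin j + eps")
    case True
    let ?M = "Max ((\<lambda>x. f x j) ` set_mset R)"
    have yn: "ynad j = real ?M" unfolding ynad_def nadir_def using True by simp
    have "?M \<in> (\<lambda>x. f x j) ` set_mset R" using xR by (intro Max_in) auto
    then have "?M \<le> F" using fle by auto
    moreover have "\<forall>y\<in>#R. f y j \<le> ?M" by (intro ballI Max_ge) auto
    ultimately show ?thesis using yn ymin0[of j] by auto
  next
    case False
    have yn: "ynad j = nadir0 f eps ymax (e t) F1 j" unfolding ynad_def nadir_def using False by simp
    have n0: "nadir0 f eps ymax (e t) F1 j \<le> real F"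
    proof (cases "hyp_ok eps ymax (e t)")
      case True
      then have "nadir0 f eps ymax (e t) F1 j \<le> ymax j" unfolding nadir0_def hyp_ok_def by simp
      then show ?thesis using ymaxF[of j] by linarith
    next
      case False
      let ?M = "Max ((\<lambda>x. f x j) ` set_mset F1)"
      have "?M \<in> (\<lambda>x. f x j) ` set_mset F1" using x by (intro Max_in) auto
      then have "?M \<le> F" using fle F1R by (auto dest: mset_subset_eqD)
      then show ?thesis unfolding nadir0_def using False by simp
    qed
    have "\<forall>y\<in>#R. real (f y j) \<le> ynad j"
    proof
      fix y assume "y \<in># R"
      then have "real (f y j) \<le> real F" using fle by simp
      then show "real (f y j) \<le> ynad j" using False yn ymin0[of j] assms(2) unfolding F_def by linarith
    qed
    then show ?thesis using yn n0 ymin0[of j] by linarith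
  qed
  have nvj: "nv y $ j = (real (f y j) - ymin j) / (ynad j - ymin j)" for y j
    unfolding nv_def normf_def by simp
  have NB: "\<forall>y\<in>#R. 0 \<le> nv y $ j \<and> nv y $ j \<le> 1" for j
    using nv_facts(1)[where R=R and f=f and j=j and c="ymin j" and D="ynad j" and F="real F", OF H1[of j] conjunct1[OF HD[of j]] conjunct2[OF HD[of j]]] unfolding nvj .
  have ND: "\<forall>y\<in>#R. \<forall>z\<in>#R. f y j < f z j \<longrightarrow> nv z $ j - nv y $ j \<ge> 1 / real F" for j
    using nv_facts(2)[where R=R and f=f and j=j and c="ymin j" and D="ynad j" and F="real F", OF H1[of j] conjunct1[OF HD[of j]] conjunct2[OF HD[of j]]] unfolding nvj .
  have cls: "f z = f y" if z: "z \<in># F1" and y: "y \<in># F1" and eq: "rp z = rp y" for z y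
  proof (rule ccontr)
    assume ne: "f z \<noteq> f y"
    have zR: "z \<in># R" and yR: "y \<in># R" using z y F1R by (auto dest: mset_subset_eqD)
    have zn: "z \<in># nd f R" and yn: "y \<in># nd f R" using z y unfolding F1nd by auto
    have "\<not> wdom f z y" using nd_incomp[OF zn yn ne] .
    then obtain i where i: "f z i < f y i" unfolding wdom_def by (auto simp: not_le)
    have "\<not> wdom f y z" using nd_incomp[OF yn zn] ne by metis
    then obtain j where j: "f y j < f z j" unfolding wdom_def by (auto simp: not_le)
    have P3: "2 * real CARD('m) powr (3 / 2) * real F \<le> real p" using assms(3) unfolding F_def .
    have B1: "\<forall>k. 0 \<le> nv y $ k \<and> nv y $ k \<le> 1" using NB yR by blast
    have B2: "\<forall>k. 0 \<le> nv z $ k \<and> nv z $ k \<le> 1" using NB zR by blast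
    have I1: "1 / real F \<le> nv y $ i - nv z $ i" using ND[of i] zR yR i by blast
    have I2: "1 / real F \<le> nv z $ j - nv y $ j" using ND[of j] zR yR j by blast
    have "A (nv y) \<noteq> A (nv z)" by (rule geo[OF Fge P3 B1 B2 I1 I2 assms(6)])
    then show False using eq unfolding rp_def by simp
  qed
  have card_rp: "card (rp ` set_mset F1) \<le> \<mu>"
  proof -
    define G where "G = (\<lambda>\<phi>::'m \<Rightarrow> nat. A (\<chi> j. (real (\<phi> j) - ymin j) / (ynad j - ymin j)))"
    have "rp = G \<circ> f" unfolding rp_def G_def nv_def normf_def by auto
    then have "rp ` set_mset F1 = G ` (f ` set_mset F1)" by (simp add: image_comp)
    then have c1: "card (rp ` set_mset F1) \<le> card (f ` set_mset F1)" by (simp add: card_image_le)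
    define rep where "rep \<phi> = (SOME z. z \<in># F1 \<and> f z = \<phi>)" for \<phi>
    have rep: "rep \<phi> \<in># F1 \<and> f (rep \<phi>) = \<phi>" if phi: "\<phi> \<in> f ` set_mset F1" for \<phi>
    proof -
      obtain z where "z \<in># F1" "f z = \<phi>" using phi by blast
      then show ?thesis unfolding rep_def by (rule someI[of "\<lambda>z. z \<in># F1 \<and> f z = \<phi>", OF conjI])
    qed
    define T where "T = rep ` (f ` set_mset F1)"
    have inj: "inj_on rep (f ` set_mset F1)"
    proof (rule inj_onI)
      fix a b assume a: "a \<in> f ` set_mset F1" and b: "b \<in> f ` set_mset F1" and ab: "rep a = rep b"
      have "a = f (rep a)" using rep[OF a] by simp
      also have "\<dots> = f (rep b)" using ab by simp
      also have "\<dots> = b" using rep[OF b] by simp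
      finally show "a = b" .
    qed
    have cT: "card T = card (f ` set_mset F1)" unfolding T_def using inj by (rule card_image)
    have TF1: "T \<subseteq> set_mset F1" unfolding T_def using rep by auto
    have Tlen: "T \<subseteq> {x. length x = n}" using TF1 F1R Rlen by (auto dest: mset_subset_eqD)
    have Tinc: "mutually_incomparable f T"
      unfolding mutually_incomparable_def incomparable_def
    proof (intro ballI impI conjI)
      fix z y assume z: "z \<in> T" and y: "y \<in> T" and zy: "z \<noteq> y"
      have "f z \<noteq> f y"
      proof
        assume "f z = f y"
        obtain \<phi> where "\<phi> \<in> f ` set_mset F1" "z = rep \<phi>" using z unfolding T_def by blast
        moreover obtain \<psi> where "\<psi> \<in> f ` set_mset F1" "y = rep \<psi>" using y unfolding T_def by blast
        ultimately show False using \<open>f z = f y\<close> zy rep by (metis (no_types))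
      qed
      moreover have "z \<in># nd f R" "y \<in># nd f R" using z y TF1 unfolding F1nd by auto
      ultimately show "\<not> wdom f z y" "\<not> wdom f y z" using nd_incomp[of z f R y] nd_incomp[of y f R z] by auto
    qed
    have "card T \<le> card S" using assms(4) Tlen Tinc unfolding max_incomparable_set_def by blast
    then show ?thesis using c1 cT assms(5) by linarith
  qed
  obtain \<rho> Ft R' where st: "sel_reach (refset p) rp nv Fi Y \<mu> (\<rho>, Ft, R')"
    and sz: "size Y + size Ft = \<mu>" and P': "P (Suc t) = Y + Ft"
    using so unfolding sel_outcome_def by blast
  show "\<exists>x'\<in># P (Suc t). \<forall>j. f x' j = f x j"
  proof (cases "k = 0")
    case True
    have Y0: "Y = {#}" unfolding Y_def True by simp
    have FiF1: "Fi = F1" unfolding Fi_def F1_def True ..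
    have st': "sel_reach (refset p) rp nv F1 {#} \<mu> (\<rho>, Ft, R')" using st unfolding Y0 FiF1 .
    have rpx: "rp x \<in> refset p" using assms(6) unfolding assoc_rule_def rp_def by blast
    obtain x' where x': "x' \<in># Ft" "rp x' = rp x"
      using sel_final[OF st' _ x rpx card_rp] sz Y0 by auto
    have "x' \<in># F1" using sel_sub[OF st'] x'(1) by (auto dest: mset_subset_eqD)
    then have "f x' = f x" using cls x x'(2) by blast
    then show ?thesis unfolding P' using x'(1) by (intro bexI[of _ x']) auto
  next
    case False
    have "rest f R k \<subseteq># rest f R 1" using False by (intro rest_anti) simp
    then have "count (rest f R k) x \<le> count (rest f R 1) x" by (simp add: subseteq_mset_def)
    also have "\<dots> = count R x - count F1 x" unfolding F1nd by simp
    finally have c: "count (rest f R k) x \<le> count R x - count F1 x" .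
    have "count F1 x > 0" using x by simp
    moreover have "count F1 x \<le> count R x" using F1R by (simp add: subseteq_mset_def)
    ultimately have "count (rest f R k) x < count R x" using c by linarith
    then have "x \<in># Y" unfolding Y_def by (simp add: in_diff_count)
    then show ?thesis using P' by auto
  qed
qed


end
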